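(* Consider the packet erasure broadcast model below with $n\ge 1$ receivers, operated under Algorithm 1 (drop when decoded), and assume $\lambda<\mu$. Then the expected size of the sender's physical queue in steady state is $\Omega\left(\frac{1}{(1-\rho)^2}\right)$ as $\rho=\lambda/\mu\to 1^-$, where $\lambda,\mu\in(0,1)$ and one of $\lambda,\mu$ is held fixed while the other varies so that $\rho$ increases to $1$.
   Context: Model: a sender broadcasts a stream of packets to $n$ receivers. Packets are fixed-length vectors over a finite field $\mathbb{F}_q$; the $k$-th packet to arrive at the sender is $\mathbf{p}_k$. Time is slotted. In each slot one new packet arrives at the sender with probability $\lambda$, independently across slots, just after the beginning of the slot. The sender has an unbounded queue (the physical queue); in each slot it may transmit one linear combination of the packets in its queue, whose coefficient vector with respect to the original packets is carried in the header. Each receiver independently receives the transmission with probability $\mu$ and otherwise suffers a (detectable) erasure; erasures are independent across receivers and slots. Feedback is perfect and reaches the sender before the end of the slot; packets are dropped from the queue just before the end of the slot; queue sizes are measured at the end of the slot. The load factor is $\rho=\lambda/\mu$. The knowledge space of a node is the space of coefficient vectors (with respect to the packets arrived so far) of linear combinations of packets it can compute; the sender's knowledge space after $A$ arrivals is $\mathbb{F}_q^A$. The virtual queue of receiver $j$ has size equal to the dimension of the sender's knowledge space minus that of receiver $j$'s. Algorithm 1: in each slot the sender transmits a random linear combination of all packets currently in its queue; the field is assumed large enough that every transmission is innovative (lies outside the knowledge space) for every receiver whose knowledge space differs from the sender's. A receiver reports decoding to the sender, and the sender regards a receiver as having decoded the packets only at times when that receiver's virtual queue becomes empty (earlier decodings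 are ignored). The sender drops a packet from its queue once all receivers have decoded it in this sense. *)

theory Defs
  imports "HOL-Probability.Probability"
begin

text \<open>Outcome of one slot: (new packet arrives?, which receivers receive the transmission).
  Receivers are indexed by 0..n-1.\<close>

definition slot_pmf :: "real \<Rightarrow> real \<Rightarrow> nat \<Rightarrow> (bool \<times> (nat \<Rightarrow> bool)) pmf" where
  "slot_pmf lam mu n = pair_pmf (bernoulli_pmf lam) (Pi_pmf {..<n} False (\<lambda>_. bernoulli_pmf mu))"

text \<open>Probability space of sample paths: i.i.d. slot outcomes; slot t (t = 0,1,...) uses w !! t.\<close>

definition paths :: "real \<Rightarrow> real \<Rightarrow> nat \<Rightarrow> (bool \<times> (nat \<Rightarrow> bool)) stream measure" where
  "paths lam mu n = stream_space (measure_pmf (slot_pmf lam mu n))"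

text \<open>Number of packets arrived by the end of the first t slots (= sender's knowledge dimension).\<close>

fun arrivals :: "(bool \<times> (nat \<Rightarrow> bool)) stream \<Rightarrow> nat \<Rightarrow> nat" where
  "arrivals w 0 = 0"
| "arrivals w (Suc t) = arrivals w t + (if fst (w !! t) then 1 else 0)"

text \<open>Under Algorithm 1 every
  transmission is innovative for a receiver whose knowledge space differs from the sender's,
  so the receiver's dimension grows by one iff it receives and its virtual queue
  (after the arrival at the start of the slot) is nonempty.\<close>

fun vqueue :: "(bool \<times> (nat \<Rightarrow> bool)) stream \<Rightarrow> nat \<Rightarrow> nat \<Rightarrow> nat" where
  "vqueue w j 0 = 0"
| "vqueue w j (Suc t) =
     (let q = vqueue w j t + (if fst (w !! t) then 1 else 0)
      in if 0 < q \<and> snd (w !! t) j then q - 1 else q)"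

text \<open>Physical queue at the end of the first t slots: packets k (1-indexed, arrived by time t)
  that not every receiver has decoded, where receiver j counts as having decoded packet k
  iff its virtual queue was empty at some time s \<le> t at which packet k had already arrived.\<close>

definition phys_queue :: "nat \<Rightarrow> (bool \<times> (nat \<Rightarrow> bool)) stream \<Rightarrow> nat \<Rightarrow> nat" where
  "phys_queue n w t = card {k \<in> {1..arrivals w t}.
      \<not> (\<forall>j<n. \<exists>s\<le>t. k \<le> arrivals w s \<and> vqueue w j s = 0)}"

definition exp_phys_queue :: "real \<Rightarrow> real \<Rightarrow> nat \<Rightarrow> nat \<Rightarrow> ennreal" where
  "exp_phys_queue lam mu n t = (\<integral>\<^sup>+ w. of_nat (phys_queue n w t) \<partial>(paths lam mu n))"

text \<open>Steady-state expected physical queue size (as a limit inferior of the expectations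
  at the end of slot t; it coincides with the limit whenever that exists).\<close>

definition ss_phys_queue :: "real \<Rightarrow> real \<Rightarrow> nat \<Rightarrow> ennreal" where
  "ss_phys_queue lam mu n = liminf (\<lambda>t. exp_phys_queue lam mu n t)"

end

theory Submission
  imports Defs
begin

definition step :: "nat \<times> nat \<Rightarrow> bool \<times> bool \<Rightarrow> nat \<times> nat" where
  "step s y = (let q = fst s + (if fst y then 1 else 0);
                   q' = (if 0 < q \<and> snd y then q - 1 else q)
               in (q', if q' = 0 then 0 else snd s + (if fst y then 1 else 0)))"

definition sl :: "real \<Rightarrow> real \<Rightarrow> (bool \<times> bool) pmf" where
  "sl lam mu = pair_pmf (bernoulli_pmf lam) (bernoulli_pmf mu)"

fun D :: "real \<Rightarrow> real \<Rightarrow> nat \<times> nat \<Rightarrow> nat \<Rightarrow> (nat \<times> nat) pmf" where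
  "D lam mu s 0 = return_pmf s"
| "D lam mu s (Suc t) = sl lam mu \<bind> (\<lambda>y. D lam mu (step s y) t)"

fun run :: "(bool \<times> (nat \<Rightarrow> bool)) stream \<Rightarrow> nat \<times> nat \<Rightarrow> nat \<Rightarrow> nat \<times> nat" where
  "run w s 0 = s"
| "run w s (Suc t) = run (stl w) (step s (fst (shd w), snd (shd w) 0)) t"

lemma finite_D: "finite (set_pmf (D lam mu s t))"
proof (induction t arbitrary: s)
  case 0 then show ?case by simp
next
  case (Suc t)
  have "finite (set_pmf (sl lam mu))" by (rule finite_subset[of _ UNIV]) auto
  then show ?case using Suc by simp
qed

lemma exp_bind_finite:
  fixes h :: "'b \<Rightarrow> real"
  assumes "finite (set_pmf p)" "\<And>x. x \<in> set_pmf p \<Longrightarrow> finite (set_pmf (f x))"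
  shows "measure_pmf.expectation (p \<bind> f) h = measure_pmf.expectation p (\<lambda>x. measure_pmf.expectation (f x) h)"
  apply (subst pmf_expectation_bind[OF assms(1) assms(2) order_refl])
   apply simp
  apply (subst integral_measure_pmf[OF assms(1)])
  apply auto
  done

lemma D_fwd: "D lam mu s (Suc t) = D lam mu s t \<bind> (\<lambda>s'. map_pmf (step s') (sl lam mu))"
proof (induction t arbitrary: s)
  case 0 then show ?case by (simp add: bind_return_pmf map_pmf_def)
next
  case (Suc t)
  have "D lam mu s (Suc (Suc t)) = sl lam mu \<bind> (\<lambda>y. D lam mu (step s y) (Suc t))" by simp
  also have "\<dots> = sl lam mu \<bind> (\<lambda>y. D lam mu (step s y) t \<bind> (\<lambda>s'. map_pmf (step s') (sl lam mu)))"
    using Suc by simp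
  also have "\<dots> = D lam mu s (Suc t) \<bind> (\<lambda>s'. map_pmf (step s') (sl lam mu))"
    by (simp add: bind_assoc_pmf)
  finally show ?case .
qed

lemma Ex_fwd:
  fixes f :: "nat \<times> nat \<Rightarrow> real"
  shows "measure_pmf.expectation (D lam mu s (Suc t)) f =
         measure_pmf.expectation (D lam mu s t) (\<lambda>s'. measure_pmf.expectation (sl lam mu) (\<lambda>y. f (step s' y)))"
proof -
  have fin: "finite (set_pmf (sl lam mu))" by (rule finite_subset[of _ UNIV]) auto
  show ?thesis
    apply (subst D_fwd)
    apply (subst exp_bind_finite)
    using finite_D fin by auto
qed

lemma Ex_back:
  fixes f :: "nat \<times> nat \<Rightarrow> real"
  shows "measure_pmf.expectation (D lam mu s (Suc t)) f =
         measure_pmf.expectation (sl lam mu) (\<lambda>y. measure_pmf.expectation (D lam mu (step s y) t) f)"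
proof -
  have fin: "finite (set_pmf (sl lam mu))" by (rule finite_subset[of _ UNIV]) auto
  show ?thesis
    apply simp
    apply (subst exp_bind_finite)
    using finite_D fin by auto
qed

lemma sl_exp:
  fixes h :: "bool \<times> bool \<Rightarrow> real"
  assumes "0 \<le> lam" "lam \<le> 1" "0 \<le> mu" "mu \<le> 1"
  shows "measure_pmf.expectation (sl lam mu) h =
     lam * mu * h (True, True) + lam * (1 - mu) * h (True, False)
   + (1 - lam) * mu * h (False, True) + (1 - lam) * (1 - mu) * h (False, False)"
proof -
  have u: "(UNIV :: (bool \<times> bool) set) = {(True,True),(True,False),(False,True),(False,False)}"
    by auto
  show ?thesis
    apply (subst integral_measure_pmf[of UNIV])
      apply simp
     apply simp
    apply (simp add: u sl_def pmf_pair assms)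
    done
qed

lemma run_fwd: "run w s (Suc t) = step (run w s t) (fst (w !! t), snd (w !! t) 0)"
  by (induction t arbitrary: s w) auto

lemma vq_run: "fst (run w (0,0) t) = vqueue w 0 t"
  by (induction t) (simp_all add: run_fwd step_def Let_def del: run.simps(2))

lemma meas_run: "(\<lambda>w. run w s t) \<in> measurable (stream_space (measure_pmf p)) (count_space UNIV)"
proof (induction t arbitrary: s)
  case 0 then show ?case by simp
next
  case (Suc t)
  have g: "(\<lambda>w. step s (fst (shd w), snd (shd w) 0)) \<in> measurable (stream_space (measure_pmf p)) (count_space UNIV)"
    by (rule measurable_compose[OF measurable_shd]) simp
  have f: "(\<lambda>w. run (stl w) i t) \<in> measurable (stream_space (measure_pmf p)) (count_space UNIV)" for i
    by (rule measurable_compose[OF measurable_stl Suc])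
  show ?case
    using measurable_compose_countable[OF f g] by simp
qed

lemma prj_slot:
  assumes "n \<ge> 1"
  shows "map_pmf (\<lambda>x. (fst x, snd x 0)) (slot_pmf lam mu n) = sl lam mu"
proof -
  have "map_pmf (\<lambda>x. (fst x, snd x 0)) (slot_pmf lam mu n) =
        map_pmf (\<lambda>(a, b). (id a, (\<lambda>f. f 0) b)) (slot_pmf lam mu n)"
    by (intro map_pmf_cong) auto
  also have "\<dots> = pair_pmf (bernoulli_pmf lam) (bernoulli_pmf mu)"
    unfolding slot_pmf_def map_pair using assms by (simp add: Pi_pmf_component)
  finally show ?thesis by (simp add: sl_def)
qed

lemma stream_int:
  assumes "n \<ge> 1"
  shows "(\<integral>\<^sup>+w. g (run w s t) \<partial>paths lam mu n) = (\<integral>\<^sup>+x. g x \<partial>D lam mu s t)"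
proof (induction t arbitrary: s)
  case 0
  interpret S: prob_space "paths lam mu n"
    unfolding paths_def by (rule prob_space.prob_space_stream_space) (rule prob_space_measure_pmf)
  show ?case by (simp add: S.emeasure_space_1)
next
  case (Suc t)
  interpret P: prob_space "measure_pmf (slot_pmf lam mu n)" by (rule prob_space_measure_pmf)
  have m: "(\<lambda>w. g (run w s (Suc t))) \<in> borel_measurable (stream_space (measure_pmf (slot_pmf lam mu n)))"
    by (rule measurable_compose[OF meas_run]) simp
  have "(\<integral>\<^sup>+w. g (run w s (Suc t)) \<partial>paths lam mu n) =
        (\<integral>\<^sup>+x. (\<integral>\<^sup>+W. g (run (x ## W) s (Suc t)) \<partial>paths lam mu n) \<partial>slot_pmf lam mu n)"
    unfolding paths_def by (rule prob_space.nn_integral_stream_space[OF prob_space_measure_pmf m])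
  also have "\<dots> = (\<integral>\<^sup>+x. (\<integral>\<^sup>+y. g y \<partial>D lam mu (step s (fst x, snd x 0)) t) \<partial>slot_pmf lam mu n)"
    using Suc by simp
  also have "\<dots> = (\<integral>\<^sup>+z. (\<integral>\<^sup>+y. g y \<partial>D lam mu (step s z) t) \<partial>map_pmf (\<lambda>x. (fst x, snd x 0)) (slot_pmf lam mu n))"
    by simp
  also have "\<dots> = (\<integral>\<^sup>+y. g y \<partial>D lam mu s (Suc t))"
    using prj_slot[OF assms] by simp
  finally show ?case .
qed

lemma arr_mono: "s \<le> t \<Longrightarrow> arrivals w s \<le> arrivals w t"
proof (induction t)
  case 0 then show ?case by simp
next
  case (Suc t)
  then show ?case by (cases "s = Suc t") (auto simp: le_Suc_eq)
qed

lemma busy_inv: "snd (run w (0,0) t) \<le> arrivals w t \<and>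
   (\<forall>s\<le>t. vqueue w 0 s = 0 \<longrightarrow> arrivals w s + snd (run w (0,0) t) \<le> arrivals w t)"
proof (induction t)
  case 0 then show ?case by simp
next
  case (Suc t)
  define B where "B = snd (run w (0,0) t)"
  define a where "a = (if fst (w !! t) then 1 else 0::nat)"
  have Q: "fst (run w (0,0) t) = vqueue w 0 t" by (rule vq_run)
  have QS: "fst (run w (0,0) (Suc t)) = vqueue w 0 (Suc t)" by (rule vq_run)
  have BS: "snd (run w (0,0) (Suc t)) = (if vqueue w 0 (Suc t) = 0 then 0 else B + a)"
    using QS unfolding run_fwd B_def a_def by (simp add: step_def Let_def del: run.simps(2))
  have AS: "arrivals w (Suc t) = arrivals w t + a" by (simp add: a_def)
  show ?case
  proof (cases "vqueue w 0 (Suc t) = 0")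
    case True
    then show ?thesis using BS arr_mono[of _ "Suc t" w] by auto
  next
    case False
    have "s \<le> Suc t \<Longrightarrow> vqueue w 0 s = 0 \<Longrightarrow> arrivals w s + (B + a) \<le> arrivals w t + a" for s
      using Suc False unfolding B_def by (cases "s = Suc t") (auto simp: le_Suc_eq)
    then show ?thesis using BS AS False Suc unfolding B_def by auto
  qed
qed

lemma phys_ge:
  assumes "n \<ge> 1"
  shows "snd (run w (0,0) t) \<le> phys_queue n w t"
proof -
  define A where "A = arrivals w t"
  define B where "B = snd (run w (0,0) t)"
  have BA: "B \<le> A" using busy_inv unfolding A_def B_def by blast
  have sub: "{A - B + 1 .. A} \<subseteq> {k \<in> {1..arrivals w t}.
      \<not> (\<forall>j<n. \<exists>s\<le>t. k \<le> arrivals w s \<and> vqueue w j s = 0)}"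
  proof
    fix k assume k: "k \<in> {A - B + 1 .. A}"
    have "\<not> (\<exists>s\<le>t. k \<le> arrivals w s \<and> vqueue w 0 s = 0)"
    proof
      assume "\<exists>s\<le>t. k \<le> arrivals w s \<and> vqueue w 0 s = 0"
      then obtain s where "s \<le> t" "k \<le> arrivals w s" "vqueue w 0 s = 0" by blast
      then have "arrivals w s + B \<le> A" using busy_inv unfolding A_def B_def by blast
      then show False using k \<open>k \<le> arrivals w s\<close> BA by auto
    qed
    then show "k \<in> {k \<in> {1..arrivals w t}. \<not> (\<forall>j<n. \<exists>s\<le>t. k \<le> arrivals w s \<and> vqueue w j s = 0)}"
    proof -
      have "0 < n" using assms by simp
      then have "\<not> (\<forall>j<n. \<exists>s\<le>t. k \<le> arrivals w s \<and> vqueue w j s = 0)"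
        using \<open>\<not> (\<exists>s\<le>t. k \<le> arrivals w s \<and> vqueue w 0 s = 0)\<close> by blast
      moreover have "k \<in> {1..arrivals w t}" using k unfolding A_def by auto
      ultimately show ?thesis by blast
    qed
  qed
  have "card {A - B + 1 .. A} \<le> phys_queue n w t"
    unfolding phys_queue_def by (rule card_mono[OF _ sub]) simp
  then show ?thesis using BA unfolding B_def by simp
qed

lemma exp_ge:
  assumes "n \<ge> 1"
  shows "ennreal (measure_pmf.expectation (D lam mu (0,0) t) (\<lambda>s. real (snd s))) \<le> exp_phys_queue lam mu n t"
proof -
  have "ennreal (measure_pmf.expectation (D lam mu (0,0) t) (\<lambda>s. real (snd s))) =
        (\<integral>\<^sup>+s. ennreal (real (snd s)) \<partial>D lam mu (0,0) t)"
    by (rule nn_integral_eq_integral[symmetric]) (auto intro: integrable_measure_pmf_finite finite_D)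
  also have "\<dots> = (\<integral>\<^sup>+w. ennreal (real (snd (run w (0,0) t))) \<partial>paths lam mu n)"
    by (rule stream_int[OF assms, symmetric])
  also have "\<dots> \<le> exp_phys_queue lam mu n t"
    unfolding exp_phys_queue_def
    by (intro nn_integral_mono) (use phys_ge[OF assms] in \<open>auto simp: ennreal_of_nat_eq_real_of_nat\<close>)
  finally show ?thesis .
qed

lemma intD[simp]: "integrable (measure_pmf (D lam mu s t)) (f :: nat \<times> nat \<Rightarrow> real)"
  by (rule integrable_measure_pmf_finite[OF finite_D])

lemma Ex_mono_supp:
  fixes f g :: "nat \<times> nat \<Rightarrow> real"
  assumes "\<And>x. x \<in> set_pmf (D lam mu s t) \<Longrightarrow> f x \<le> g x"
  shows "measure_pmf.expectation (D lam mu s t) f \<le> measure_pmf.expectation (D lam mu s t) g"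
  by (rule integral_mono_AE) (use assms in \<open>auto simp: AE_measure_pmf_iff\<close>)

lemma Ex_cong_supp:
  fixes f g :: "nat \<times> nat \<Rightarrow> real"
  assumes "\<And>x. x \<in> set_pmf (D lam mu s t) \<Longrightarrow> f x = g x"
  shows "measure_pmf.expectation (D lam mu s t) f = measure_pmf.expectation (D lam mu s t) g"
  by (rule integral_cong_AE) (use assms in \<open>auto simp: AE_measure_pmf_iff\<close>)

lemma supp_inv: "x \<in> set_pmf (D lam mu (0,0) t) \<Longrightarrow> (fst x = 0 \<longrightarrow> snd x = 0) \<and> fst x \<le> t"
proof (induction t arbitrary: x)
  case 0 then show ?case by simp
next
  case (Suc t)
  from Suc.prems obtain s y where s: "s \<in> set_pmf (D lam mu (0,0) t)" and x: "x = step s y"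
    unfolding D_fwd by auto
  have "fst s \<le> t" using Suc.IH[OF s] by simp
  then show ?case unfolding x by (auto simp: step_def Let_def)
qed

lemma step_mono:
  assumes "fst s \<le> fst s'" "snd s \<le> snd s'"
  shows "fst (step s y) \<le> fst (step s' y) \<and> snd (step s y) \<le> snd (step s' y)"
  using assms by (cases s; cases s'; cases y) (auto simp: step_def Let_def)

definition ind :: "nat \<Rightarrow> nat \<times> nat \<Rightarrow> real" where
  "ind k s = (if k \<le> fst s then 1 else 0)"

lemma geo_closed:
  fixes r :: real
  shows "(\<Sum>k<N. (2 * real k + 1) * r ^ k) * (1 - r)^2 = (1 + r) - (2 * real N + 1) * r ^ N + (2 * real N - 1) * r ^ (N + 1)"
  by (induction N) (simp_all add: algebra_simps power2_eq_square)

lemma geo_bound: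
  fixes r :: real
  assumes "0 \<le> r" "r < 1"
  shows "(\<Sum>k<N. (2 * real k + 1) * r ^ (Suc k)) \<le> 2 / (1 - r)^2"
proof -
  have rN: "r ^ (N + 1) \<le> r ^ N" using assms by (simp add: power_le_one mult_left_le_one_le)
  have "(2 * real N - 1) * r ^ (N + 1) \<le> (2 * real N + 1) * r ^ N"
  proof -
    have "(2 * real N - 1) * r ^ (N + 1) \<le> (2 * real N + 1) * r ^ (N + 1)"
      using assms by (intro mult_right_mono) auto
    also have "\<dots> \<le> (2 * real N + 1) * r ^ N" using rN by (intro mult_left_mono) auto
    finally show ?thesis .
  qed
  then have "(\<Sum>k<N. (2 * real k + 1) * r ^ k) * (1 - r)^2 \<le> 1 + r" using geo_closed[where N=N and r=r] by linarith
  then have S: "(\<Sum>k<N. (2 * real k + 1) * r ^ k) \<le> (1 + r) / (1 - r)^2"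
    using assms by (simp add: pos_le_divide_eq)
  have S0: "0 \<le> (\<Sum>k<N. (2 * real k + 1) * r ^ k)" using assms by (intro sum_nonneg) auto
  have "(\<Sum>k<N. (2 * real k + 1) * r ^ (Suc k)) = r * (\<Sum>k<N. (2 * real k + 1) * r ^ k)"
    by (simp add: sum_distrib_left algebra_simps)
  also have "\<dots> \<le> 1 * ((1 + r) / (1 - r)^2)"
    using S S0 assms by (intro mult_mono) auto
  also have "\<dots> \<le> 2 / (1 - r)^2" using assms by (simp add: divide_right_mono)
  finally show ?thesis .
qed

lemma sq_sum: "(\<Sum>k<Q. (2 * real k + 1)) = (real Q)^2"
  by (induction Q) (simp_all add: algebra_simps power2_eq_square)

lemma sq_ind:
  assumes "fst s \<le> t"
  shows "(real (fst s))^2 = (\<Sum>k<t. (2 * real k + 1) * ind (Suc k) s)"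
proof -
  have "(\<Sum>k<t. (2 * real k + 1) * ind (Suc k) s) = (\<Sum>k<t. if k \<in> {..<fst s} then 2 * real k + 1 else 0)"
    unfolding ind_def by (intro sum.cong) auto
  also have "\<dots> = (\<Sum>k\<in>{..<t} \<inter> {..<fst s}. 2 * real k + 1)"
    by (rule sum.inter_restrict[symmetric]) simp
  also have "{..<t} \<inter> {..<fst s} = {..<fst s}" using assms by auto
  finally show ?thesis using sq_sum by simp
qed

context
  fixes lam mu :: real
  assumes lm: "0 < lam" "lam < mu" "mu < 1"
begin

lemma lm01: "0 \<le> lam" "lam \<le> 1" "0 \<le> mu" "mu \<le> 1"
  using lm by auto

lemma Ex_P:
  fixes f :: "nat \<times> nat \<Rightarrow> real"
  shows "measure_pmf.expectation (D lam mu s (Suc t)) f =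
    measure_pmf.expectation (D lam mu s t) (\<lambda>s. lam * mu * f (step s (True, True)) + lam * (1 - mu) * f (step s (True, False))
   + (1 - lam) * mu * f (step s (False, True)) + (1 - lam) * (1 - mu) * f (step s (False, False)))"
  by (simp only: Ex_fwd sl_exp[OF lm01])

lemma D_mono:
  fixes f :: "nat \<times> nat \<Rightarrow> real"
  assumes f: "\<And>a b a' b'. a \<le> a' \<Longrightarrow> b \<le> b' \<Longrightarrow> f (a, b) \<le> f (a', b')"
  shows "fst s \<le> fst s' \<Longrightarrow> snd s \<le> snd s' \<Longrightarrow>
    measure_pmf.expectation (D lam mu s t) f \<le> measure_pmf.expectation (D lam mu s' t) f"
proof (induction t arbitrary: s s')
  case 0
  then show ?case using f[of "fst s" "fst s'" "snd s" "snd s'"] by simp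
next
  case (Suc t)
  have h: "measure_pmf.expectation (D lam mu (step s y) t) f \<le> measure_pmf.expectation (D lam mu (step s' y) t) f" for y
    using Suc.IH step_mono[OF Suc.prems] by blast
  have w: "0 \<le> lam * mu" "0 \<le> lam * (1 - mu)" "0 \<le> (1 - lam) * mu" "0 \<le> (1 - lam) * (1 - mu)"
    using lm01 by auto
  show ?case
    unfolding Ex_back sl_exp[OF lm01]
    by (intro add_mono mult_left_mono h w)
qed

lemma Ex_incr:
  fixes f :: "nat \<times> nat \<Rightarrow> real"
  assumes f: "\<And>a b a' b'. a \<le> a' \<Longrightarrow> b \<le> b' \<Longrightarrow> f (a, b) \<le> f (a', b')"
  shows "measure_pmf.expectation (D lam mu (0,0) t) f \<le> measure_pmf.expectation (D lam mu (0,0) (Suc t)) f"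
proof -
  have h: "measure_pmf.expectation (D lam mu (0,0) t) f \<le> measure_pmf.expectation (D lam mu (step (0,0) y) t) f" for y
    by (rule D_mono[where f=f, OF f]) auto
  have w: "0 \<le> lam * mu" "0 \<le> lam * (1 - mu)" "0 \<le> (1 - lam) * mu" "0 \<le> (1 - lam) * (1 - mu)"
    using lm01 by auto
  have "measure_pmf.expectation (D lam mu (0,0) t) f =
      lam * mu * measure_pmf.expectation (D lam mu (0,0) t) f + lam * (1 - mu) * measure_pmf.expectation (D lam mu (0,0) t) f
   + (1 - lam) * mu * measure_pmf.expectation (D lam mu (0,0) t) f + (1 - lam) * (1 - mu) * measure_pmf.expectation (D lam mu (0,0) t) f"
    by (simp add: algebra_simps)
  also have "\<dots> \<le> measure_pmf.expectation (D lam mu (0,0) (Suc t)) f"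
    unfolding Ex_back sl_exp[OF lm01]
    by (intro add_mono mult_left_mono h w)
  finally show ?thesis .
qed

lemma Ex_incr':
  fixes f :: "nat \<times> nat \<Rightarrow> real"
  assumes f: "\<And>a b a' b'. a \<le> a' \<Longrightarrow> b \<le> b' \<Longrightarrow> f (a, b) \<le> f (a', b')"
  shows "t \<le> T \<Longrightarrow> measure_pmf.expectation (D lam mu (0,0) t) f \<le> measure_pmf.expectation (D lam mu (0,0) T) f"
proof (induction T rule: dec_induct)
  case base then show ?case by simp
next
  case (step n)
  then show ?case using Ex_incr[where f=f, OF f, of n] by linarith
qed



lemma fst_step:
  "fst (step s (True, True)) = fst s" "fst (step s (True, False)) = fst s + 1"
  "fst (step s (False, True)) = fst s - 1" "fst (step s (False, False)) = fst s"
  by (auto simp: step_def Let_def)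

lemma tail_pt:
  "lam * mu * ind (Suc j) (step s (True, True)) + lam * (1 - mu) * ind (Suc j) (step s (True, False))
   + (1 - lam) * mu * ind (Suc j) (step s (False, True)) + (1 - lam) * (1 - mu) * ind (Suc j) (step s (False, False))
   = lam * (1 - mu) * ind j s + (lam * mu + (1 - lam) * (1 - mu)) * ind (Suc j) s + mu * (1 - lam) * ind (Suc (Suc j)) s"
  unfolding ind_def fst_step by (auto simp: algebra_simps)

lemma Ex_const1: "measure_pmf.expectation (D lam mu s t) (\<lambda>_. 1::real) = 1"
  by simp

lemma tail: "measure_pmf.expectation (D lam mu (0,0) t) (ind k) \<le> (lam * (1 - mu) / (mu * (1 - lam))) ^ k"
proof (induction t arbitrary: k)
  case 0
  have "0 \<le> lam * (1 - mu) / (mu * (1 - lam))" using lm by simp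
  then have "0 \<le> (lam * (1 - mu) / (mu * (1 - lam))) ^ k" by simp
  then show ?case by (cases k) (auto simp: ind_def)
next
  case (Suc t)
  define pp where "pp = lam * (1 - mu)"
  define pm where "pm = mu * (1 - lam)"
  define p0 where "p0 = lam * mu + (1 - lam) * (1 - mu)"
  define r where "r = pp / pm"
  have pos: "0 < pp" "0 < pm" "0 \<le> p0" using lm unfolding pp_def pm_def p0_def
    by (auto intro: mult_pos_pos add_nonneg_nonneg mult_nonneg_nonneg)
  have rpos: "0 \<le> r" using pos unfolding r_def by simp
  show ?case
  proof (cases k)
    case 0
    have "ind 0 = (\<lambda>_. 1)" by (auto simp: ind_def)
    then show ?thesis using 0 by simp
  next
    case (Suc j)
    let ?E = "\<lambda>f. measure_pmf.expectation (D lam mu (0,0) t) f"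
    have "measure_pmf.expectation (D lam mu (0,0) (Suc t)) (ind k) =
          ?E (\<lambda>s. pp * ind j s + p0 * ind (Suc j) s + pm * ind (Suc (Suc j)) s)"
      unfolding Ex_P Suc tail_pt pp_def pm_def p0_def by simp
    also have "\<dots> = pp * ?E (ind j) + p0 * ?E (ind (Suc j)) + pm * ?E (ind (Suc (Suc j)))"
      by simp
    also have "\<dots> \<le> pp * r ^ j + p0 * r ^ Suc j + pm * r ^ Suc (Suc j)"
    proof -
      have ih: "?E (ind i) \<le> r ^ i" for i using Suc.IH unfolding r_def pp_def pm_def by simp
      show ?thesis by (intro add_mono mult_left_mono ih less_imp_le pos order_refl)
    qed
    also have "\<dots> = r ^ Suc j * (pm + p0 + pp)"
    proof -
      have "pp = r * pm" using pos unfolding r_def by simp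
      then show ?thesis by (simp add: algebra_simps)
    qed
    also have "pm + p0 + pp = 1" unfolding pm_def p0_def pp_def by (simp add: algebra_simps)
    finally show ?thesis using Suc unfolding r_def pp_def pm_def by simp
  qed
qed



lemma M2:
  "measure_pmf.expectation (D lam mu (0,0) t) (\<lambda>s. (real (fst s))^2) \<le> 2 * (mu * (1 - lam))^2 / (mu - lam)^2"
proof -
  define r where "r = lam * (1 - mu) / (mu * (1 - lam))"
  have pm: "0 < mu * (1 - lam)" using lm by simp
  have r0: "0 \<le> r" using lm unfolding r_def by simp
  have r1: "r < 1" unfolding r_def using pm lm by (simp add: divide_less_eq algebra_simps)
  have omr: "1 - r = (mu - lam) / (mu * (1 - lam))"
  proof -
    have "1 - r = (mu * (1 - lam) - lam * (1 - mu)) / (mu * (1 - lam))"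
      unfolding r_def using pm lm by (simp add: diff_divide_distrib del: mult_pos_pos zero_less_mult_iff)
    also have "mu * (1 - lam) - lam * (1 - mu) = mu - lam" by (simp add: algebra_simps)
    finally show ?thesis .
  qed
  have "measure_pmf.expectation (D lam mu (0,0) t) (\<lambda>s. (real (fst s))^2) =
        measure_pmf.expectation (D lam mu (0,0) t) (\<lambda>s. \<Sum>k<t. (2 * real k + 1) * ind (Suc k) s)"
    by (rule Ex_cong_supp) (use supp_inv sq_ind in blast)
  also have "\<dots> = (\<Sum>k<t. (2 * real k + 1) * measure_pmf.expectation (D lam mu (0,0) t) (ind (Suc k)))"
    by (subst Bochner_Integration.integral_sum) (auto intro: integrable_measure_pmf_finite finite_D)
  also have "\<dots> \<le> (\<Sum>k<t. (2 * real k + 1) * r ^ (Suc k))"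
  proof (intro sum_mono mult_left_mono)
    fix k
    show "measure_pmf.expectation (D lam mu (0,0) t) (ind (Suc k)) \<le> r ^ Suc k"
      using tail[of t "Suc k"] unfolding r_def .
  qed auto
  also have "\<dots> \<le> 2 / (1 - r)^2" by (rule geo_bound[OF r0 r1])
  also have "\<dots> = 2 * (mu * (1 - lam))^2 / (mu - lam)^2"
    unfolding omr using pm by (simp add: power_divide)
  finally show ?thesis .
qed


lemma Qsq_pt:
  "lam * mu * (real (fst (step s (True, True))))^2 + lam * (1 - mu) * (real (fst (step s (True, False))))^2
   + (1 - lam) * mu * (real (fst (step s (False, True))))^2 + (1 - lam) * (1 - mu) * (real (fst (step s (False, False))))^2
   + 2 * (mu - lam) * real (fst s) \<ge> (real (fst s))^2 + lam * (1 - mu)"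
proof (cases "fst s")
  case 0
  then show ?thesis by (simp add: fst_step algebra_simps)
next
  case (Suc m)
  have e: "lam * mu * (real (fst (step s (True, True))))^2 + lam * (1 - mu) * (real (fst (step s (True, False))))^2
   + (1 - lam) * mu * (real (fst (step s (False, True))))^2 + (1 - lam) * (1 - mu) * (real (fst (step s (False, False))))^2
   + 2 * (mu - lam) * real (fst s) = (real (fst s))^2 + lam * (1 - mu) + mu * (1 - lam)"
    unfolding fst_step Suc by (simp add: algebra_simps power2_eq_square)
  have "0 \<le> mu * (1 - lam)" using lm by simp
  then show ?thesis using e by linarith
qed

lemma Qtel:
  "measure_pmf.expectation (D lam mu (0,0) T) (\<lambda>s. (real (fst s))^2)
   + 2 * (mu - lam) * (\<Sum>t<T. measure_pmf.expectation (D lam mu (0,0) t) (\<lambda>s. real (fst s)))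
   \<ge> real T * (lam * (1 - mu))"
proof (induction T)
  case 0 then show ?case by simp
next
  case (Suc T)
  let ?E = "\<lambda>f. measure_pmf.expectation (D lam mu (0,0) T) f"
  have "?E (\<lambda>s. (real (fst s))^2 + lam * (1 - mu) - 2 * (mu - lam) * real (fst s))
      \<le> measure_pmf.expectation (D lam mu (0,0) (Suc T)) (\<lambda>s. (real (fst s))^2)"
    unfolding Ex_P by (rule Ex_mono_supp) (use Qsq_pt in \<open>auto simp: algebra_simps\<close>)
  moreover have "?E (\<lambda>s. (real (fst s))^2 + lam * (1 - mu) - 2 * (mu - lam) * real (fst s))
     = ?E (\<lambda>s. (real (fst s))^2) + lam * (1 - mu) - 2 * (mu - lam) * ?E (\<lambda>s. real (fst s))"
    by simp
  ultimately show ?case using Suc by (simp add: algebra_simps)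
qed

lemma Phi_pt:
  assumes "fst s = 0 \<longrightarrow> snd s = 0"
  shows
  "lam * mu * (real (fst (step s (True, True))) * real (min (snd (step s (True, True))) K))
   + lam * (1 - mu) * (real (fst (step s (True, False))) * real (min (snd (step s (True, False))) K))
   + (1 - lam) * mu * (real (fst (step s (False, True))) * real (min (snd (step s (False, True))) K))
   + (1 - lam) * (1 - mu) * (real (fst (step s (False, False))) * real (min (snd (step s (False, False))) K))
   + (mu - lam) * real (min (snd s) K)
   = real (fst s) * real (min (snd s) K) + (lam * real (fst s) + lam * (1 - mu)) * (if snd s < K then 1 else 0)"
proof -
  obtain Q B where s: "s = (Q, B)" by (cases s)
  show ?thesis
  proof (cases Q)
    case 0
    then have "B = 0" using assms s by simp
    then show ?thesis using 0 s by (cases K) (simp_all add: step_def algebra_simps)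
  next
    case (Suc m)
    show ?thesis
    proof (cases "B < K")
      case True
      then have "Suc B \<le> K" by simp
      then show ?thesis using s Suc True
        by (cases m) (simp_all add: step_def algebra_simps min_def)
    next
      case False
      then show ?thesis using s Suc
        by (cases m) (simp_all add: step_def algebra_simps min_def)
    qed
  qed
qed


lemma Phi_step:
  "measure_pmf.expectation (D lam mu (0,0) (Suc t)) (\<lambda>s. real (fst s) * real (min (snd s) K))
   + (mu - lam) * measure_pmf.expectation (D lam mu (0,0) t) (\<lambda>s. real (min (snd s) K))
   = measure_pmf.expectation (D lam mu (0,0) t) (\<lambda>s. real (fst s) * real (min (snd s) K))
   + measure_pmf.expectation (D lam mu (0,0) t) (\<lambda>s. (lam * real (fst s) + lam * (1 - mu)) * (if snd s < K then 1 else 0))"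
proof -
  let ?E = "\<lambda>f. measure_pmf.expectation (D lam mu (0,0) t) f"
  have "measure_pmf.expectation (D lam mu (0,0) (Suc t)) (\<lambda>s. real (fst s) * real (min (snd s) K))
      = ?E (\<lambda>s. real (fst s) * real (min (snd s) K) + (lam * real (fst s) + lam * (1 - mu)) * (if snd s < K then 1 else 0)
               - (mu - lam) * real (min (snd s) K))"
    unfolding Ex_P
    by (rule Ex_cong_supp) (use Phi_pt supp_inv in \<open>fastforce simp: algebra_simps\<close>)
  also have "\<dots> = ?E (\<lambda>s. real (fst s) * real (min (snd s) K))
     + ?E (\<lambda>s. (lam * real (fst s) + lam * (1 - mu)) * (if snd s < K then 1 else 0))
     - (mu - lam) * ?E (\<lambda>s. real (min (snd s) K))"
    by simp
  finally show ?thesis by simp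
qed

lemma Phi_tel:
  "measure_pmf.expectation (D lam mu (0,0) (T0 + N)) (\<lambda>s. real (fst s) * real (min (snd s) K))
   + (mu - lam) * (\<Sum>i<N. measure_pmf.expectation (D lam mu (0,0) (T0 + i)) (\<lambda>s. real (min (snd s) K)))
   = measure_pmf.expectation (D lam mu (0,0) T0) (\<lambda>s. real (fst s) * real (min (snd s) K))
   + (\<Sum>i<N. measure_pmf.expectation (D lam mu (0,0) (T0 + i)) (\<lambda>s. (lam * real (fst s) + lam * (1 - mu)) * (if snd s < K then 1 else 0)))"
proof (induction N)
  case 0 then show ?case by simp
next
  case (Suc N)
  show ?case using Suc Phi_step[of "T0 + N" K] by (simp add: algebra_simps)
qed


lemma qlow:
  assumes "t \<ge> nat \<lceil>2 * (2 * (mu * (1 - lam))^2 / (mu - lam)^2) / (lam * (1 - mu))\<rceil>"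
  shows "measure_pmf.expectation (D lam mu (0,0) t) (\<lambda>s. real (fst s)) \<ge> lam * (1 - mu) / (4 * (mu - lam))"
proof -
  define pp where "pp = lam * (1 - mu)"
  define M where "M = 2 * (mu * (1 - lam))^2 / (mu - lam)^2"
  define q where "q = measure_pmf.expectation (D lam mu (0,0) t) (\<lambda>s. real (fst s))"
  have pp: "0 < pp" using lm unfolding pp_def by simp
  have Mpos: "0 < M" using lm unfolding M_def by simp
  have d: "0 < mu - lam" using lm by simp
  have t1: "real t \<ge> 2 * M / pp" using assms unfolding M_def pp_def by linarith
  have tpp: "real t * pp \<ge> 2 * M" using t1 pp by (simp add: pos_divide_le_eq)
  have tpos: "0 < real t" using t1 Mpos pp by (smt (verit) divide_pos_pos)
  have "(\<Sum>s<t. measure_pmf.expectation (D lam mu (0,0) s) (\<lambda>s. real (fst s))) \<le> (\<Sum>s<t. q)"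
    unfolding q_def by (intro sum_mono Ex_incr') auto
  then have S: "(\<Sum>s<t. measure_pmf.expectation (D lam mu (0,0) s) (\<lambda>s. real (fst s))) \<le> real t * q" by simp
  have "real t * pp \<le> M + 2 * (mu - lam) * (real t * q)"
    using Qtel[of t] M2[of t] S d unfolding M_def pp_def
    by (smt (verit) mult_left_mono)
  then have "real t * pp / 2 \<le> 2 * (mu - lam) * (real t * q)" using tpp by linarith
  then have "real t * (pp / 2) \<le> real t * (2 * (mu - lam) * q)" by (simp add: algebra_simps)
  then have "pp / 2 \<le> 2 * (mu - lam) * q" using tpos by (simp add: mult_le_cancel_left_pos)
  then have "pp / (4 * (mu - lam)) \<le> q" using d by (simp add: divide_le_eq algebra_simps)
  then show ?thesis unfolding pp_def q_def .
qed


lemma exists_big: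
  "\<exists>t. measure_pmf.expectation (D lam mu (0,0) t) (\<lambda>s. real (snd s)) \<ge> lam * (lam * (1 - mu) / (4 * (mu - lam))) / (4 * (mu - lam))"
proof (rule ccontr)
  assume H0: "\<not> ?thesis"
  define pp where "pp = lam * (1 - mu)"
  define M where "M = 2 * (mu * (1 - lam))^2 / (mu - lam)^2"
  define a where "a = pp / (4 * (mu - lam))"
  define \<beta> where "\<beta> = lam * a / (4 * (mu - lam))"
  define T0 where "T0 = nat \<lceil>2 * M / pp\<rceil>"
  define \<epsilon> where "\<epsilon> = a / (4 * M)"
  define K where "K = nat \<lceil>\<beta> / (\<epsilon> * a)\<rceil>"
  define N where "N = nat \<lceil>4 * real K * M / (lam * a)\<rceil> + 1"
  let ?E = "\<lambda>t f. measure_pmf.expectation (D lam mu (0,0) t) f"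
  have H: "?E t (\<lambda>s. real (snd s)) < \<beta>" for t using H0 unfolding \<beta>_def a_def pp_def by (meson not_le)
  have d: "0 < mu - lam" using lm by simp
  have pp: "0 < pp" using lm unfolding pp_def by simp
  have Mpos: "0 < M" using lm unfolding M_def by simp
  have apos: "0 < a" using pp d unfolding a_def by simp
  have bpos: "0 < \<beta>" using apos d lm unfolding \<beta>_def by simp
  have epos: "0 < \<epsilon>" using apos Mpos unfolding \<epsilon>_def by simp
  have Kge: "real K \<ge> \<beta> / (\<epsilon> * a)" unfolding K_def by linarith
  have Kpos: "0 < real K" using Kge bpos epos apos by (smt (verit) divide_pos_pos mult_pos_pos)
  have bK: "\<beta> / (4 * \<epsilon> * real K) \<le> a / 4"
  proof -
    have "\<beta> \<le> real K * (\<epsilon> * a)" using Kge epos apos by (simp add: divide_le_eq)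
    then show ?thesis using Kpos epos by (simp add: divide_le_eq algebra_simps)
  qed
  have eM: "\<epsilon> * M = a / 4" unfolding \<epsilon>_def using Mpos by simp
  have Nge: "real N > 4 * real K * M / (lam * a)" unfolding N_def by linarith
  have glow: "?E t (\<lambda>s. (lam * real (fst s) + lam * (1 - mu)) * (if snd s < K then 1 else 0)) \<ge> lam * a / 2"
    if t: "t \<ge> T0" for t
  proof -
    have q: "?E t (\<lambda>s. real (fst s)) \<ge> a"
      using qlow[of t] t unfolding T0_def a_def pp_def M_def by simp
    have pt: "real (fst s) * (if snd s < K then 1 else 0) \<ge> real (fst s) - \<epsilon> * (real (fst s))^2 - real (snd s) / (4 * \<epsilon> * real K)" for s
    proof (cases "snd s < K")
      case True
      have "0 \<le> \<epsilon> * (real (fst s))^2 + real (snd s) / (4 * \<epsilon> * real K)" using epos Kpos by simp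
      then show ?thesis using True by simp
    next
      case False
      have "real (fst s) - \<epsilon> * (real (fst s))^2 \<le> 1 / (4 * \<epsilon>)"
      proof -
        have "0 \<le> (2 * \<epsilon> * real (fst s) - 1)^2" by simp
        then have "4 * \<epsilon> * (real (fst s) - \<epsilon> * (real (fst s))^2) \<le> 1" by (simp add: power2_eq_square algebra_simps)
        then show ?thesis using epos by (simp add: le_divide_eq algebra_simps)
      qed
      also have "1 / (4 * \<epsilon>) \<le> real (snd s) / (4 * \<epsilon> * real K)"
        using False epos Kpos by (simp add: divide_simps)
      finally show ?thesis using False by simp
    qed
    have "?E t (\<lambda>s. real (fst s) * (if snd s < K then 1 else 0)) \<ge>
          ?E t (\<lambda>s. real (fst s) - \<epsilon> * (real (fst s))^2 - real (snd s) / (4 * \<epsilon> * real K))"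
      by (rule integral_mono) (use pt in auto)
    also have "?E t (\<lambda>s. real (fst s) - \<epsilon> * (real (fst s))^2 - real (snd s) / (4 * \<epsilon> * real K))
       = ?E t (\<lambda>s. real (fst s)) - \<epsilon> * ?E t (\<lambda>s. (real (fst s))^2) - ?E t (\<lambda>s. real (snd s)) / (4 * \<epsilon> * real K)"
      by simp
    finally have A: "?E t (\<lambda>s. real (fst s) * (if snd s < K then 1 else 0)) \<ge>
        ?E t (\<lambda>s. real (fst s)) - \<epsilon> * ?E t (\<lambda>s. (real (fst s))^2) - ?E t (\<lambda>s. real (snd s)) / (4 * \<epsilon> * real K)" .
    have "\<epsilon> * ?E t (\<lambda>s. (real (fst s))^2) \<le> \<epsilon> * M"
      using M2[of t] epos unfolding M_def by (intro mult_left_mono) auto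
    moreover have "?E t (\<lambda>s. real (snd s)) / (4 * \<epsilon> * real K) \<le> \<beta> / (4 * \<epsilon> * real K)"
      using H[of t] epos Kpos by (intro divide_right_mono) auto
    ultimately have B: "?E t (\<lambda>s. real (fst s) * (if snd s < K then 1 else 0)) \<ge> a / 2"
      using A q eM bK by linarith
    have "?E t (\<lambda>s. (lam * real (fst s) + lam * (1 - mu)) * (if snd s < K then 1 else 0)) \<ge>
          ?E t (\<lambda>s. lam * (real (fst s) * (if snd s < K then 1 else 0)))"
      by (rule integral_mono) (use lm in auto)
    also have "?E t (\<lambda>s. lam * (real (fst s) * (if snd s < K then 1 else 0))) = lam * ?E t (\<lambda>s. real (fst s) * (if snd s < K then 1 else 0))"
      by simp
    finally have C: "lam * ?E t (\<lambda>s. real (fst s) * (if snd s < K then 1 else 0)) \<le>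
        ?E t (\<lambda>s. (lam * real (fst s) + lam * (1 - mu)) * (if snd s < K then 1 else 0))" .
    have "lam * (a / 2) \<le> lam * ?E t (\<lambda>s. real (fst s) * (if snd s < K then 1 else 0))"
      using B lm by (intro mult_left_mono) auto
    then show ?thesis using C by simp
  qed
  note tel = Phi_tel[of T0 N K]
  have P0: "?E T0 (\<lambda>s. real (fst s) * real (min (snd s) K)) \<ge> 0"
    by (rule Bochner_Integration.integral_nonneg) auto
  have P1: "?E (T0 + N) (\<lambda>s. real (fst s) * real (min (snd s) K)) \<le> real K * M"
  proof -
    have "?E (T0 + N) (\<lambda>s. real (fst s) * real (min (snd s) K)) \<le> ?E (T0 + N) (\<lambda>s. real K * (real (fst s))^2)"
    proof (rule integral_mono)
      fix s :: "nat \<times> nat"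
      have "real (fst s) \<le> (real (fst s))^2" by (cases "fst s") (auto simp: power2_eq_square)
      then show "real (fst s) * real (min (snd s) K) \<le> real K * (real (fst s))^2"
        by (smt (verit) mult_mono of_nat_0_le_iff of_nat_mono min.cobounded2 mult.commute)
    qed auto
    also have "\<dots> = real K * ?E (T0 + N) (\<lambda>s. (real (fst s))^2)" by simp
    also have "\<dots> \<le> real K * M" using M2[of "T0 + N"] Kpos unfolding M_def by (intro mult_left_mono) auto
    finally show ?thesis .
  qed
  have S1: "(\<Sum>i<N. ?E (T0 + i) (\<lambda>s. real (min (snd s) K))) \<le> real N * \<beta>"
  proof -
    have "(\<Sum>i<N. ?E (T0 + i) (\<lambda>s. real (min (snd s) K))) \<le> (\<Sum>i<N. \<beta>)"
    proof (rule sum_mono)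
      fix i
      have "?E (T0 + i) (\<lambda>s. real (min (snd s) K)) \<le> ?E (T0 + i) (\<lambda>s. real (snd s))"
        by (rule integral_mono) auto
      then show "?E (T0 + i) (\<lambda>s. real (min (snd s) K)) \<le> \<beta>" using H[of "T0 + i"] by linarith
    qed
    then show ?thesis by simp
  qed
  have S2: "(\<Sum>i<N. ?E (T0 + i) (\<lambda>s. (lam * real (fst s) + lam * (1 - mu)) * (if snd s < K then 1 else 0))) \<ge> real N * (lam * a / 2)"
  proof -
    have "(\<Sum>i<N. lam * a / 2) \<le> (\<Sum>i<N. ?E (T0 + i) (\<lambda>s. (lam * real (fst s) + lam * (1 - mu)) * (if snd s < K then 1 else 0)))"
      by (rule sum_mono) (rule glow, simp)
    then show ?thesis by simp
  qed
  have "real N * (lam * a / 2) - real K * M \<le> (mu - lam) * (real N * \<beta>)"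
  proof -
    have "(mu - lam) * (\<Sum>i<N. ?E (T0 + i) (\<lambda>s. real (min (snd s) K))) \<le> (mu - lam) * (real N * \<beta>)"
      using S1 d by (intro mult_left_mono) auto
    then show ?thesis using tel P0 P1 S2 by linarith
  qed
  note X = this
  have eb: "(mu - lam) * \<beta> = lam * a / 4" unfolding \<beta>_def using d by (simp add: field_simps)
  have E1: "(mu - lam) * (real N * \<beta>) = real N * (lam * a / 4)" using eb by (metis mult.left_commute)
  have E2: "real N * (lam * a / 2) = 2 * (real N * (lam * a / 4))" by simp
  have "real N * (lam * a / 4) \<le> real K * M" using X E1 E2 by linarith
  then have "real N \<le> 4 * real K * M / (lam * a)" using lm apos by (simp add: le_divide_eq algebra_simps)
  then show False using Nge by linarith
qed

end
lemma main_bound: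
  assumes n: "n \<ge> 1" and lm: "0 < lam" "lam < mu" "mu < 1"
  shows "ennreal (lam^2 * (1 - mu) / (16 * (mu - lam)^2)) \<le> ss_phys_queue lam mu n"
proof -
  let ?b = "\<lambda>t. measure_pmf.expectation (D lam mu (0,0) t) (\<lambda>s. real (snd s))"
  obtain t0 where t0: "?b t0 \<ge> lam * (lam * (1 - mu) / (4 * (mu - lam))) / (4 * (mu - lam))"
    using exists_big[OF lm] by blast
  have eq: "lam * (lam * (1 - mu) / (4 * (mu - lam))) / (4 * (mu - lam)) = lam^2 * (1 - mu) / (16 * (mu - lam)^2)"
    by (simp add: power2_eq_square field_simps)
  have "eventually (\<lambda>t. ennreal (lam^2 * (1 - mu) / (16 * (mu - lam)^2)) \<le> exp_phys_queue lam mu n t) sequentially"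
    unfolding eventually_sequentially
  proof (intro exI allI impI)
    fix t assume "t0 \<le> t"
    then have "?b t0 \<le> ?b t" by (intro Ex_incr'[OF lm]) auto
    then have "lam^2 * (1 - mu) / (16 * (mu - lam)^2) \<le> ?b t" using t0 eq by linarith
    then have "ennreal (lam^2 * (1 - mu) / (16 * (mu - lam)^2)) \<le> ennreal (?b t)" by (rule ennreal_leI)
    also have "\<dots> \<le> exp_phys_queue lam mu n t" by (rule exp_ge[OF n])
    finally show "ennreal (lam^2 * (1 - mu) / (16 * (mu - lam)^2)) \<le> exp_phys_queue lam mu n t" .
  qed
  then show ?thesis unfolding ss_phys_queue_def by (rule Liminf_bounded)
qed

lemma final_ineq:
  fixes lam mu c :: real
  assumes "0 < lam" "lam < mu" "mu < 1" "c * mu^2 \<le> lam^2 * (1 - mu) / 16"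
  shows "c / (1 - lam / mu)^2 \<le> lam^2 * (1 - mu) / (16 * (mu - lam)^2)"
proof -
  have "1 - lam / mu = (mu - lam) / mu" using assms by (simp add: field_simps)
  then have "c / (1 - lam / mu)^2 = (c * mu^2) / (mu - lam)^2" using assms by (simp add: power_divide)
  also have "\<dots> \<le> (lam^2 * (1 - mu) / 16) / (mu - lam)^2"
    using assms by (intro divide_right_mono) auto
  also have "\<dots> = lam^2 * (1 - mu) / (16 * (mu - lam)^2)" by simp
  finally show ?thesis .
qed

theorem theorem1:
  fixes n :: nat
  assumes "n \<ge> 1"
  shows "(\<forall>mu::real. 0 < mu \<and> mu < 1 \<longrightarrow>
            (\<exists>c>0. \<forall>\<^sub>F lam in at_left mu.
               ennreal (c / (1 - lam / mu)\<^sup>2) \<le> ss_phys_queue lam mu n))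
       \<and> (\<forall>lam::real. 0 < lam \<and> lam < 1 \<longrightarrow>
            (\<exists>c>0. \<forall>\<^sub>F mu in at_right lam.
               ennreal (c / (1 - lam / mu)\<^sup>2) \<le> ss_phys_queue lam mu n))"
proof (intro conjI allI impI)
  fix mu :: real assume mu: "0 < mu \<and> mu < 1"
  show "\<exists>c>0. \<forall>\<^sub>F lam in at_left mu. ennreal (c / (1 - lam / mu)\<^sup>2) \<le> ss_phys_queue lam mu n"
  proof (intro exI conjI)
    show "0 < (1 - mu) / 64" using mu by simp
    have ev: "eventually (\<lambda>lam. lam \<in> {mu/2<..<mu}) (at_left mu)"
      by (rule eventually_at_left_real) (use mu in simp)
    show "\<forall>\<^sub>F lam in at_left mu. ennreal ((1 - mu) / 64 / (1 - lam / mu)\<^sup>2) \<le> ss_phys_queue lam mu n"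
    proof (rule eventually_mono[OF ev])
      fix lam assume l: "lam \<in> {mu/2<..<mu}"
      have lm: "0 < lam" "lam < mu" "mu < 1" using l mu by auto
      have "mu^2 \<le> 4 * lam^2"
      proof -
        have "mu \<le> 2 * lam" using l by simp
        then have "mu^2 \<le> (2 * lam)^2" using mu by (intro power_mono) auto
        then show ?thesis by (simp add: power2_eq_square)
      qed
      then have "(1 - mu) * mu^2 \<le> (1 - mu) * (4 * lam^2)" using mu by (intro mult_left_mono) auto
      moreover have "(1 - mu) / 64 * mu^2 = ((1 - mu) * mu^2) / 64" by (simp add: field_simps)
      moreover have "lam^2 * (1 - mu) / 16 = ((1 - mu) * (4 * lam^2)) / 64" by (simp add: field_simps)
      ultimately have "(1 - mu) / 64 * mu^2 \<le> lam^2 * (1 - mu) / 16" by linarith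
      then have "(1 - mu) / 64 / (1 - lam / mu)\<^sup>2 \<le> lam^2 * (1 - mu) / (16 * (mu - lam)^2)"
        by (rule final_ineq[OF lm])
      then show "ennreal ((1 - mu) / 64 / (1 - lam / mu)\<^sup>2) \<le> ss_phys_queue lam mu n"
        using main_bound[OF assms lm] by (meson ennreal_leI order_trans)
    qed
  qed
next
  fix lam :: real assume lam: "0 < lam \<and> lam < 1"
  show "\<exists>c>0. \<forall>\<^sub>F mu in at_right lam. ennreal (c / (1 - lam / mu)\<^sup>2) \<le> ss_phys_queue lam mu n"
  proof (intro exI conjI)
    show "0 < lam^2 * (1 - lam) / 32" using lam by simp
    have ev: "eventually (\<lambda>mu. mu \<in> {lam<..<(1 + lam)/2}) (at_right lam)"
      by (rule eventually_at_right_real) (use lam in simp)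
    show "\<forall>\<^sub>F mu in at_right lam. ennreal (lam^2 * (1 - lam) / 32 / (1 - lam / mu)\<^sup>2) \<le> ss_phys_queue lam mu n"
    proof (rule eventually_mono[OF ev])
      fix mu assume m: "mu \<in> {lam<..<(1 + lam)/2}"
      have lm: "0 < lam" "lam < mu" "mu < 1" using m lam by auto
      have m2: "mu^2 \<le> 1" using lm by (simp add: power_le_one)
      have "lam^2 * (1 - lam) / 32 * mu^2 \<le> lam^2 * (1 - lam) / 32"
        using m2 lam by (simp add: mult_left_le)
      also have "\<dots> \<le> lam^2 * (1 - mu) / 16"
      proof -
        have "(1 - lam) / 2 \<le> 1 - mu" using m by simp
        then have "lam^2 * ((1 - lam) / 2) \<le> lam^2 * (1 - mu)" by (intro mult_left_mono) auto
        then show ?thesis by (simp add: mult.commute)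
      qed
      finally have "lam^2 * (1 - lam) / 32 / (1 - lam / mu)\<^sup>2 \<le> lam^2 * (1 - mu) / (16 * (mu - lam)^2)"
        by (rule final_ineq[OF lm])
      then show "ennreal (lam^2 * (1 - lam) / 32 / (1 - lam / mu)\<^sup>2) \<le> ss_phys_queue lam mu n"
        using main_bound[OF assms lm] by (meson ennreal_leI order_trans)
    qed
  qed
qed

end
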